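(* Let $m\ge 2$, let the key set $\{k_1,\dots,k_m\}$ be $\epsilon$-JL with $\epsilon\le\frac{1}{m^2(m-1)}$, and let the values satisfy $\langle v_i,v_i\rangle=1$ for all $i$ and $|\langle v_i,v_j\rangle|\le\alpha$ for all $i\neq j$, where $\alpha<\frac{m-1}{m+1}$. Then for every $m$-repetitive MQAR stream over $S$, every $0\le t\le N$, and every $i$ with $r_i^{(t)}>0$, the decoding step applied to the query $k_i$ and the gradient-descent state $W^{(t)}$ outputs exactly $v_i$. Thus gradient descent with decoding solves $m$-repetitive MQAR exactly using a state of $d^2$ parameters.
   Context: All vectors are row vectors in $\mathbb{R}^{1\times d}$. Fix $m\ge 1$ and a set $S=\{(k_1,v_1),\dots,(k_m,v_m)\}$ with $k_1,\dots,k_m\in\mathbb{R}^{1\times d}$ pairwise distinct and $v_1,\dots,v_m\in\mathbb{R}^{1\times d}$. An $m$-repetitive MQAR stream is a sequence $(k^{(1)},v^{(1)}),\dots,(k^{(N)},v^{(N)})$ with $(k^{(t)},v^{(t)})\in S$ for every $t$. For $0\le t\le N$ and $i\in\{1,\dots,m\}$, $r_i^{(t)}$ denotes the number of $s\in\{1,\dots,t\}$ with $(k^{(s)},v^{(s)})=(k_i,v_i)$. The key set is $\epsilon$-JL if $\langle k_i,k_i\rangle=1$ for all $i$ and $|\langle k_i,k_j\rangle|\le\epsilon$ for all $i\neq j$. The gradient-descent (delta-rule) state is the sequence of matrices $W^{(t)}\in\mathbb{R}^{d\times d}$ defined by $W^{(0)}=0$ and $W^{(t+1)}=W^{(t)}-(k^{(t+1)})^{\top}k^{(t+1)}W^{(t)}+(k^{(t+1)})^{\top}v^{(t+1)}$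 for $0\le t<N$. Decoding step: given a query $k_i$ and a state $W$, output $v_{i^*}$ where $i^*=\arg\max_{i'\in\{1,\dots,m\}}\langle v_{i'},k_iW\rangle$. *)

theory Defs
  imports "HOL-Analysis.Analysis"
begin

text \<open>Row vectors in R^{1 x d} are rendered as real^'d; a d x d matrix W as real^'d^'d
  (W $ i $ j = entry in row i, column j). The row-vector/matrix product x W is  x v* W.\<close>

definition outer :: "real^'d \<Rightarrow> real^'d \<Rightarrow> real^'d^'d" where
  "outer a b = (\<chi> i j. a $ i * b $ j)"

text \<open>Gradient-descent (delta-rule) state. The stream is given by an index sequence
  idx :: nat => nat, the t-th element of the stream being (k (idx t), v (idx t)).\<close>
fun gd_state :: "(nat \<Rightarrow> real^'d) \<Rightarrow> (nat \<Rightarrow> real^'d) \<Rightarrow> (nat \<Rightarrow> nat) \<Rightarrow> nat \<Rightarrow> real^'d^'d" where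
  "gd_state k v idx 0 = 0"
| "gd_state k v idx (Suc t) =
     gd_state k v idx t - outer (k (idx (Suc t))) (k (idx (Suc t))) ** gd_state k v idx t
     + outer (k (idx (Suc t))) (v (idx (Suc t)))"

definition rcount :: "(nat \<Rightarrow> nat) \<Rightarrow> nat \<Rightarrow> nat \<Rightarrow> nat" where
  "rcount idx i t = card {s \<in> {1..t}. idx s = i}"

definition eps_JL :: "nat \<Rightarrow> (nat \<Rightarrow> real^'d) \<Rightarrow> real \<Rightarrow> bool" where
  "eps_JL m k \<epsilon> \<longleftrightarrow> (\<forall>i\<in>{1..m}. k i \<bullet> k i = 1) \<and>
     (\<forall>i\<in>{1..m}. \<forall>j\<in>{1..m}. i \<noteq> j \<longrightarrow> \<bar>k i \<bullet> k j\<bar> \<le> \<epsilon>)"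

definition decode_argmax :: "nat \<Rightarrow> (nat \<Rightarrow> real^'d) \<Rightarrow> real^'d \<Rightarrow> real^'d^'d \<Rightarrow> nat set" where
  "decode_argmax m v q W = {i'\<in>{1..m}. \<forall>j\<in>{1..m}. v j \<bullet> (q v* W) \<le> v i' \<bullet> (q v* W)}"

end

theory Submission
  imports Defs
begin

lemma outer_mult: "outer a b ** W = outer a (b v* W)"
  by (simp add: outer_def vec_eq_iff matrix_matrix_mult_def vector_matrix_mult_def sum_distrib_left mult.assoc)
lemma vm_outer: "x v* outer a b = (x \<bullet> a) *\<^sub>R b"
  by (simp add: outer_def vec_eq_iff vector_matrix_mult_def inner_vec_def sum_distrib_right sum_distrib_left mult.assoc mult.commute mult.left_commute)
lemma vm_sum: "finite A \<Longrightarrow> x v* (\<Sum>j\<in>A. W j) = (\<Sum>j\<in>A. x v* W j)"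
  by (induction A rule: finite_induct) (auto simp: vector_matrix_left_distrib vector_matrix_mult_def vec_eq_iff sum.distrib algebra_simps)
lemma outer_add2: "outer a (x + y) = outer a x + outer a y"
  by (simp add: outer_def vec_eq_iff algebra_simps)
lemma outer_diff2: "outer a (x - y) = outer a x - outer a y"
  by (simp add: outer_def vec_eq_iff algebra_simps)
lemma outer_zero2: "outer a 0 = 0"
  by (simp add: outer_def vec_eq_iff)
lemma outer_sum2: "finite A \<Longrightarrow> outer a (\<Sum>j\<in>A. x j) = (\<Sum>j\<in>A. outer a (x j))"
  by (induction A rule: finite_induct) (auto simp: outer_add2 outer_zero2)


fun cst :: "nat \<Rightarrow> (nat \<Rightarrow> real^'d) \<Rightarrow> (nat \<Rightarrow> real^'d) \<Rightarrow> (nat \<Rightarrow> nat) \<Rightarrow> nat \<Rightarrow> nat \<Rightarrow> real^'d" where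
  "cst m k v idx 0 j = 0"
| "cst m k v idx (Suc t) j = (if j = idx (Suc t)
     then v j - (\<Sum>l\<in>{1..m}-{j}. (k j \<bullet> k l) *\<^sub>R cst m k v idx t l)
     else cst m k v idx t j)"

lemma rcount_0: "rcount idx i 0 = 0"
  by (simp add: rcount_def)

lemma rcount_Suc: "rcount idx i (Suc t) = rcount idx i t + (if idx (Suc t) = i then 1 else 0)"
proof -
  have "{s \<in> {1..Suc t}. idx s = i} = {s \<in> {1..t}. idx s = i} \<union> (if idx (Suc t) = i then {Suc t} else {})"
    by (auto simp: le_Suc_eq)
  then show ?thesis by (simp add: rcount_def)
qed

lemma rep:
  assumes "\<forall>s\<in>{1..t}. idx s \<in> {1..m}" and "\<forall>i\<in>{1..m}. k i \<bullet> k i = 1"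
  shows "gd_state k v idx t = (\<Sum>j\<in>{1..m}. outer (k j) (cst m k v idx t j))"
  using assms(1)
proof (induction t)
  case 0
  then show ?case by (simp add: outer_zero2)
next
  case (Suc t)
  define a where "a = idx (Suc t)"
  define C where "C = cst m k v idx t"
  define S where "S = (\<Sum>j\<in>{1..m}-{a}. (k a \<bullet> k j) *\<^sub>R C j)"
  define R where "R = (\<Sum>j\<in>{1..m}-{a}. outer (k j) (C j))"
  have a: "a \<in> {1..m}" using Suc.prems a_def by auto
  have IH: "gd_state k v idx t = (\<Sum>j\<in>{1..m}. outer (k j) (C j))"
    using Suc C_def by auto
  have W: "(\<Sum>j\<in>{1..m}. outer (k j) (C j)) = outer (k a) (C a) + R"
    unfolding R_def using a by (simp add: sum.remove)
  have kW: "k a v* (\<Sum>j\<in>{1..m}. outer (k j) (C j)) = C a + S"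
  proof -
    have "k a v* (\<Sum>j\<in>{1..m}. outer (k j) (C j)) = (\<Sum>j\<in>{1..m}. (k a \<bullet> k j) *\<^sub>R C j)"
      by (simp add: vm_sum vm_outer)
    also have "\<dots> = (k a \<bullet> k a) *\<^sub>R C a + S"
      unfolding S_def using a by (simp add: sum.remove)
    finally show ?thesis using a assms(2) by simp
  qed
  have C': "cst m k v idx (Suc t) j = (if j = a then v a - S else C j)" for j
    by (simp add: a_def C_def S_def)
  have R': "(\<Sum>j\<in>{1..m}. outer (k j) (cst m k v idx (Suc t) j)) = outer (k a) (v a - S) + R"
  proof -
    have "(\<Sum>j\<in>{1..m}. outer (k j) (cst m k v idx (Suc t) j))
        = outer (k a) (v a - S) + (\<Sum>j\<in>{1..m}-{a}. outer (k j) (cst m k v idx (Suc t) j))"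
      using a by (simp add: sum.remove C' del: cst.simps)
    also have "(\<Sum>j\<in>{1..m}-{a}. outer (k j) (cst m k v idx (Suc t) j)) = R"
      unfolding R_def by (rule sum.cong) (auto simp: C' simp del: cst.simps)
    finally show ?thesis .
  qed
  have "gd_state k v idx (Suc t) = gd_state k v idx t - outer (k a) (k a) ** gd_state k v idx t + outer (k a) (v a)"
    by (simp add: a_def)
  also have "\<dots> = (outer (k a) (C a) + R) - outer (k a) (C a + S) + outer (k a) (v a)"
    by (unfold IH outer_mult, unfold kW, unfold W) (rule refl)
  also have "\<dots> = outer (k a) (v a - S) + R"
    by (simp add: outer_add2 outer_diff2)
  finally show ?case using R' by simp
qed

lemma sum_bound:
  fixes x :: "nat \<Rightarrow> real^'d"
  assumes "finite A" "\<forall>j\<in>A. \<bar>c j\<bar> \<le> e" "\<forall>j\<in>A. norm (x j) \<le> M"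
  shows "norm (\<Sum>j\<in>A. c j *\<^sub>R x j) \<le> real (card A) * e * M"
proof -
  have "norm (\<Sum>j\<in>A. c j *\<^sub>R x j) \<le> (\<Sum>j\<in>A. norm (c j *\<^sub>R x j))" by (rule norm_sum)
  also have "\<dots> \<le> (\<Sum>j\<in>A. e * M)"
  proof (rule sum_mono)
    fix j assume j: "j \<in> A"
    have "\<bar>c j\<bar> * norm (x j) \<le> e * M"
      using assms j by (intro mult_mono) auto
    then show "norm (c j *\<^sub>R x j) \<le> e * M" by simp
  qed
  also have "\<dots> = real (card A) * e * M" by simp
  finally show ?thesis .
qed

definition good :: "real \<Rightarrow> (nat \<Rightarrow> real^'d) \<Rightarrow> real^'d \<Rightarrow> nat \<Rightarrow> bool" where
  "good B v x j \<longleftrightarrow> x = 0 \<or> norm (x - v j) \<le> B - 1"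

lemma good_norm:
  assumes "good B v x j" "norm (v j) = 1" "B \<ge> 1"
  shows "norm x \<le> B"
proof (cases "x = 0")
  case False
  then have "norm (x - v j) \<le> B - 1" using assms good_def by auto
  moreover have "norm x \<le> norm (x - v j) + norm (v j)" using norm_triangle_ineq[of "x - v j" "v j"] by simp
  ultimately show ?thesis using assms by simp
qed (use assms in auto)

lemma good_dist:
  assumes "good B v x j" "good B v y j" "norm (v j) = 1" "B \<ge> 1" "B \<le> 2"
  shows "norm (x - y) \<le> B"
proof (cases "x = 0 \<or> y = 0")
  case True
  then show ?thesis using good_norm[OF assms(1,3,4)] good_norm[OF assms(2,3,4)] by auto
next
  case False
  then have "norm (x - v j) \<le> B - 1" "norm (y - v j) \<le> B - 1" using assms good_def by auto
  moreover have "norm (x - y) \<le> norm (x - v j) + norm (y - v j)"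
    using norm_triangle_ineq4[of "x - v j" "y - v j"] by simp
  ultimately show ?thesis using assms by simp
qed

lemma step_good:
  assumes a: "a \<in> {1..m}"
    and hkij: "\<forall>i\<in>{1..m}. \<forall>j\<in>{1..m}. i \<noteq> j \<longrightarrow> \<bar>k i \<bullet> k j\<bar> \<le> \<epsilon>"
    and hv: "\<forall>i\<in>{1..m}. norm (v i) = 1"
    and hB: "real (m - 1) * \<epsilon> * B \<le> B - 1" "B \<ge> 1"
    and X: "\<forall>j\<in>{1..m}. good B v (X j) j"
  shows "norm ((\<Sum>j\<in>{1..m}-{a}. (k a \<bullet> k j) *\<^sub>R X j)) \<le> B - 1"
proof -
  have "norm ((\<Sum>j\<in>{1..m}-{a}. (k a \<bullet> k j) *\<^sub>R X j)) \<le> real (card ({1..m}-{a})) * \<epsilon> * B"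
  proof (rule sum_bound)
    show "\<forall>j\<in>{1..m}-{a}. \<bar>k a \<bullet> k j\<bar> \<le> \<epsilon>" using a hkij by simp
    show "\<forall>j\<in>{1..m}-{a}. norm (X j) \<le> B"
    proof
      fix j assume "j \<in> {1..m}-{a}"
      then have "j \<in> {1..m}" by simp
      then show "norm (X j) \<le> B" using hv X hB(2) good_norm[of B v "X j" j] by simp
    qed
  qed simp
  also have "real (card ({1..m}-{a})) = real (m - 1)" using a by simp
  finally show ?thesis using hB by simp
qed

lemma invariant:
  assumes hk: "\<forall>i\<in>{1..m}. k i \<bullet> k i = 1"
    and hkij: "\<forall>i\<in>{1..m}. \<forall>j\<in>{1..m}. i \<noteq> j \<longrightarrow> \<bar>k i \<bullet> k j\<bar> \<le> \<epsilon>"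
    and hv: "\<forall>i\<in>{1..m}. norm (v i) = 1"
    and hB: "real (m - 1) * \<epsilon> * B \<le> B - 1" "B \<ge> 1"
    and st: "\<forall>s\<in>{1..t}. idx s \<in> {1..m}"
  shows "(\<forall>j\<in>{1..m}. good B v (cst m k v idx t j) j) \<and>
    (\<forall>i\<in>{1..m}. rcount idx i t > 0 \<longrightarrow> (\<exists>D. cst m k v idx t i = v i - (\<Sum>j\<in>{1..m}-{i}. (k i \<bullet> k j) *\<^sub>R D j)
        \<and> (\<forall>j\<in>{1..m}. good B v (D j) j)))"
  using st
proof (induction t)
  case 0
  then show ?case by (simp add: good_def rcount_0)
next
  case (Suc t)
  define a where "a = idx (Suc t)"
  define C where "C = cst m k v idx t"
  have a: "a \<in> {1..m}" using Suc.prems a_def by auto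
  have IH1: "\<forall>j\<in>{1..m}. good B v (C j) j" and
    IH2: "\<forall>i\<in>{1..m}. rcount idx i t > 0 \<longrightarrow> (\<exists>D. C i = v i - (\<Sum>j\<in>{1..m}-{i}. (k i \<bullet> k j) *\<^sub>R D j)
        \<and> (\<forall>j\<in>{1..m}. good B v (D j) j))"
    using Suc C_def by auto
  have C': "cst m k v idx (Suc t) j = (if j = a then v a - (\<Sum>j\<in>{1..m}-{a}. (k a \<bullet> k j) *\<^sub>R C j) else C j)" for j
    by (simp add: a_def C_def)
  have g: "good B v (cst m k v idx (Suc t) j) j" if j: "j \<in> {1..m}" for j
  proof (cases "j = a")
    case True
    have "norm ((\<Sum>j\<in>{1..m}-{a}. (k a \<bullet> k j) *\<^sub>R C j)) \<le> B - 1"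
      by (rule step_good[OF a hkij hv hB IH1])
    then show ?thesis using True by (simp add: C' good_def del: cst.simps)
  next
    case False
    then show ?thesis using IH1 j by (simp add: C' del: cst.simps)
  qed
  have d: "\<exists>D. cst m k v idx (Suc t) i = v i - (\<Sum>j\<in>{1..m}-{i}. (k i \<bullet> k j) *\<^sub>R D j)
        \<and> (\<forall>j\<in>{1..m}. good B v (D j) j)" if i: "i \<in> {1..m}" and r: "rcount idx i (Suc t) > 0" for i
  proof (cases "i = a")
    case True
    then show ?thesis using IH1 by (intro exI[of _ C]) (simp add: C' del: cst.simps)
  next
    case False
    then have "rcount idx i t > 0" using r by (simp add: rcount_Suc a_def)
    then show ?thesis using IH2 i False by (simp add: C' del: cst.simps)
  qed
  show ?case using g d by blast
qed


lemma arith_facts: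
  fixes M e a :: real
  assumes M: "M \<ge> 2" and e: "e \<le> 1 / (M^2 * (M - 1))" and e0: "e \<ge> 0"
    and al: "a < (M - 1) / (M + 1)"
  defines "B \<equiv> M^2 / (M^2 - 1)"
  shows "(M - 1) * e * B \<le> B - 1" "1 \<le> B" "B \<le> 2" "a + (B - 1) < 1 - (B - 1)"
proof -
  have M2: "M^2 \<ge> 4" using power_mono[of 2 M 2] M by simp
  have p: "M^2 - 1 > 0" using M2 by simp
  have B1: "B - 1 = 1 / (M^2 - 1)" unfolding B_def using p by (simp add: field_simps)
  have "(M - 1) * e \<le> (M - 1) * (1 / (M^2 * (M - 1)))" using M e by (intro mult_left_mono) auto
  also have "\<dots> = 1 / M^2" using M by (simp add: field_simps)
  finally have be: "(M - 1) * e \<le> 1 / M^2" .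
  have Bp: "B > 0" unfolding B_def using p M2 by (intro divide_pos_pos) auto
  have "(M - 1) * e * B \<le> 1 / M^2 * B" using be Bp by (intro mult_right_mono) auto
  also have "\<dots> = B - 1" unfolding B1 unfolding B_def using p M2 M by (simp add: field_simps)
  finally show "(M - 1) * e * B \<le> B - 1" .
  have "1 / (M^2 - 1) > 0" using p by simp
  then show "1 \<le> B" using B1 by linarith
  have "1 / (M^2 - 1) \<le> 1" using M2 by simp
  then show "B \<le> 2" using B1 by linarith
  have "2 / (M^2 - 1) \<le> 2 / (M + 1)"
  proof (rule divide_left_mono)
    have "(M - 2) * (M + 1) \<ge> 0" using M by simp
    then show "M + 1 \<le> M^2 - 1" by (simp add: power2_eq_square algebra_simps)
    show "0 < (M^2 - 1) * (M + 1)" using p M by simp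
  qed simp
  moreover have "(M - 1) / (M + 1) = 1 - 2 / (M + 1)" using M by (simp add: field_simps)
  ultimately show "a + (B - 1) < 1 - (B - 1)" using al B1 by simp
qed

theorem mainTheorem6:
  fixes m N :: nat and k v :: "nat \<Rightarrow> real^'d" and \<epsilon> \<alpha> :: real and idx :: "nat \<Rightarrow> nat"
  assumes m2: "m \<ge> 2"
    and kdist: "\<forall>i\<in>{1..m}. \<forall>j\<in>{1..m}. i \<noteq> j \<longrightarrow> k i \<noteq> k j"
    and JL: "eps_JL m k \<epsilon>"
    and eps: "\<epsilon> \<le> 1 / (real m ^ 2 * (real m - 1))"
    and vnorm: "\<forall>i\<in>{1..m}. v i \<bullet> v i = 1"
    and vinc: "\<forall>i\<in>{1..m}. \<forall>j\<in>{1..m}. i \<noteq> j \<longrightarrow> \<bar>v i \<bullet> v j\<bar> \<le> \<alpha>"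
    and alpha: "\<alpha> < (real m - 1) / (real m + 1)"
    and stream: "\<forall>t\<in>{1..N}. idx t \<in> {1..m}"
  shows "\<forall>t\<in>{0..N}. \<forall>i\<in>{1..m}. rcount idx i t > 0 \<longrightarrow>
           decode_argmax m v (k i) (gd_state k v idx t) = {i}"
proof (intro ballI impI)
  fix t i assume t: "t \<in> {0..N}" and i: "i \<in> {1..m}" and r: "rcount idx i t > 0"
  have hk: "\<forall>i\<in>{1..m}. k i \<bullet> k i = 1"
    and hkij: "\<forall>i\<in>{1..m}. \<forall>j\<in>{1..m}. i \<noteq> j \<longrightarrow> \<bar>k i \<bullet> k j\<bar> \<le> \<epsilon>"
    using JL by (auto simp: eps_JL_def)
  have e0: "\<epsilon> \<ge> 0" using hkij[rule_format, of 1 2] m2 by auto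
  have hv: "\<forall>i\<in>{1..m}. norm (v i) = 1" using vnorm by (simp add: norm_eq_sqrt_inner)
  define B where "B = real m ^ 2 / (real m ^ 2 - 1)"
  have M: "real m \<ge> 2" using m2 by simp
  have rm1: "real (m - 1) = real m - 1" using m2 by simp
  note AF = arith_facts[OF M eps e0 alpha, folded B_def]
  have hB: "real (m - 1) * \<epsilon> * B \<le> B - 1" using AF(1) rm1 by simp
  have st: "\<forall>s\<in>{1..t}. idx s \<in> {1..m}" using stream t by auto
  note inv = invariant[OF hk hkij hv hB AF(2) st]
  define C where "C = cst m k v idx t"
  obtain D where D: "C i = v i - (\<Sum>j\<in>{1..m}-{i}. (k i \<bullet> k j) *\<^sub>R D j)"
     "\<forall>j\<in>{1..m}. good B v (D j) j"
    using inv i r C_def by blast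
  have gC: "\<forall>j\<in>{1..m}. good B v (C j) j" using inv C_def by simp
  define y where "y = k i v* gd_state k v idx t"
  have "y = (\<Sum>j\<in>{1..m}. (k i \<bullet> k j) *\<^sub>R C j)"
    unfolding y_def rep[OF st hk] C_def by (simp add: vm_sum vm_outer)
  also have "\<dots> = (k i \<bullet> k i) *\<^sub>R C i + (\<Sum>j\<in>{1..m}-{i}. (k i \<bullet> k j) *\<^sub>R C j)"
    using i by (simp add: sum.remove)
  also have "\<dots> = v i + (\<Sum>j\<in>{1..m}-{i}. (k i \<bullet> k j) *\<^sub>R (C j - D j))"
    using i hk D(1) by (simp add: scaleR_diff_right sum_subtractf)
  finally have yeq: "y - v i = (\<Sum>j\<in>{1..m}-{i}. (k i \<bullet> k j) *\<^sub>R (C j - D j))" by simp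
  have "norm (y - v i) \<le> real (card ({1..m}-{i})) * \<epsilon> * B"
    unfolding yeq
  proof (rule sum_bound)
    show "\<forall>j\<in>{1..m}-{i}. \<bar>k i \<bullet> k j\<bar> \<le> \<epsilon>" using i hkij by simp
    show "\<forall>j\<in>{1..m}-{i}. norm (C j - D j) \<le> B"
    proof
      fix j assume "j \<in> {1..m}-{i}"
      then have j: "j \<in> {1..m}" by simp
      show "norm (C j - D j) \<le> B"
        using good_dist[of B v "C j" j "D j"] gC D(2) hv AF(2,3) j by simp
    qed
  qed simp
  also have "real (card ({1..m}-{i})) = real (m - 1)" using i by simp
  finally have ny: "norm (y - v i) \<le> B - 1" using hB by simp
  have cs: "\<bar>v j \<bullet> (y - v i)\<bar> \<le> B - 1" if j: "j \<in> {1..m}" for j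
  proof -
    have "\<bar>v j \<bullet> (y - v i)\<bar> \<le> norm (v j) * norm (y - v i)" by (rule Cauchy_Schwarz_ineq2)
    then show ?thesis using hv j ny by simp
  qed
  have yi: "v i \<bullet> y \<ge> 1 - (B - 1)"
  proof -
    have "v i \<bullet> y = v i \<bullet> v i + v i \<bullet> (y - v i)" by (simp add: inner_diff_right)
    then show ?thesis using cs[OF i] vnorm i by simp
  qed
  have yj: "v j \<bullet> y < v i \<bullet> y" if j: "j \<in> {1..m}" "j \<noteq> i" for j
  proof -
    have "v j \<bullet> y = v j \<bullet> v i + v j \<bullet> (y - v i)" by (simp add: inner_diff_right)
    moreover have "v j \<bullet> v i \<le> \<alpha>" using vinc j i by fastforce
    ultimately have "v j \<bullet> y \<le> \<alpha> + (B - 1)" using cs[OF j(1)] by simp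
    then show ?thesis using yi AF(4) by simp
  qed
  show "decode_argmax m v (k i) (gd_state k v idx t) = {i}"
    unfolding decode_argmax_def y_def[symmetric]
  proof (intro set_eqI iffI)
    fix x assume "x \<in> {i' \<in> {1..m}. \<forall>j\<in>{1..m}. v j \<bullet> y \<le> v i' \<bullet> y}"
    then have x: "x \<in> {1..m}" "v i \<bullet> y \<le> v x \<bullet> y" using i by auto
    show "x \<in> {i}" using yj[of x] x by force
  next
    fix x assume "x \<in> {i}"
    then show "x \<in> {i' \<in> {1..m}. \<forall>j\<in>{1..m}. v j \<bullet> y \<le> v i' \<bullet> y}"
      using i yj by (auto simp: less_imp_le) (metis less_imp_le order_refl)
  qed
qed

end
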